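(* For every closed type $A$ and every semantic value $v\in[\![A]\!]$ there is a closed term $\emptyset\vdash \mathrm{reify}(v):A$ such that $[\![\mathrm{reify}(v)]\!]=v$.
   Context: Types: $A,B ::= X \mid A\to B \mid A_1\times A_2 \mid 1 \mid A_1+A_2 \mid 0$ ($X$ atomic); a closed type is one containing no atomic types. Terms: $x \mid \lambda x.t \mid t\,u \mid (t_1,t_2) \mid \pi_i t \mid () \mid \sigma_i t \mid \mathtt{match}\ t\ \mathtt{with}\ (\sigma_1 x_1\to u_1 \mid \sigma_2 x_2\to u_2) \mid \mathtt{absurd}(t)$ with standard simple typing; $\mathtt{absurd}(t):A$ for any $A$ when $t:0$. Closed types denote sets: $[\![A\to B]\!]$ = total functions $[\![A]\!]\to[\![B]\!]$, $[\![A\times B]\!]$ = cartesian product, $[\![1]\!]=\{\star\}$, $[\![A+B]\!]=\{(1,a)\mid a\in[\![A]\!]\}\uplus\{(2,b)\mid b\in[\![B]\!]\}$, $[\![0]\!]=\emptyset$. For a closed term $\emptyset\vdash t:A$, $[\![t]\!]\in[\![A]\!]$ is its standard set-theoretic interpretation. *)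

theory Defs
  imports Main "HOL-Library.FSet"
begin

datatype ty =
    TAtom nat
  | TArr ty ty
  | TProd ty ty
  | TOne
  | TSum ty ty
  | TZero

fun closed_ty :: "ty \<Rightarrow> bool" where
  "closed_ty (TAtom X) = False"
| "closed_ty (TArr A B) = (closed_ty A \<and> closed_ty B)"
| "closed_ty (TProd A B) = (closed_ty A \<and> closed_ty B)"
| "closed_ty TOne = True"
| "closed_ty (TSum A B) = (closed_ty A \<and> closed_ty B)"
| "closed_ty TZero = True"

type_synonym var = nat

datatype tm =
    Var var
  | Lam var ty tm
  | App tm tm
  | Pr tm tm
  | Proj1 tm
  | Proj2 tm
  | Unit
  | Inj1 tm
  | Inj2 tm
  | Match tm var tm var tm
  | Absurd tm

inductive typed :: "(var \<Rightarrow> ty option) \<Rightarrow> tm \<Rightarrow> ty \<Rightarrow> bool" where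
  t_var:   "\<Gamma> x = Some A \<Longrightarrow> typed \<Gamma> (Var x) A"
| t_lam:   "typed (\<Gamma>(x \<mapsto> A)) t B \<Longrightarrow> typed \<Gamma> (Lam x A t) (TArr A B)"
| t_app:   "typed \<Gamma> t (TArr A B) \<Longrightarrow> typed \<Gamma> u A \<Longrightarrow> typed \<Gamma> (App t u) B"
| t_pair:  "typed \<Gamma> t1 A1 \<Longrightarrow> typed \<Gamma> t2 A2 \<Longrightarrow> typed \<Gamma> (Pr t1 t2) (TProd A1 A2)"
| t_proj1: "typed \<Gamma> t (TProd A1 A2) \<Longrightarrow> typed \<Gamma> (Proj1 t) A1"
| t_proj2: "typed \<Gamma> t (TProd A1 A2) \<Longrightarrow> typed \<Gamma> (Proj2 t) A2"
| t_unit:  "typed \<Gamma> Unit TOne"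
| t_inj1:  "typed \<Gamma> t A1 \<Longrightarrow> typed \<Gamma> (Inj1 t) (TSum A1 A2)"
| t_inj2:  "typed \<Gamma> t A2 \<Longrightarrow> typed \<Gamma> (Inj2 t) (TSum A1 A2)"
| t_match: "typed \<Gamma> t (TSum A1 A2) \<Longrightarrow> typed (\<Gamma>(x1 \<mapsto> A1)) u1 C \<Longrightarrow>
            typed (\<Gamma>(x2 \<mapsto> A2)) u2 C \<Longrightarrow> typed \<Gamma> (Match t x1 u1 x2 u2) C"
| t_absurd: "typed \<Gamma> t TZero \<Longrightarrow> typed \<Gamma> (Absurd t) A"

section \<open>Semantic values: a universe containing the denotations of all closed types.
  A function value is represented by its (finite) graph.\<close>

datatype val =
    VStar
  | VPair val val
  | VIn1 val
  | VIn2 val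
  | VFun "(val \<times> val) fset"

fun sem :: "ty \<Rightarrow> val set" where
  "sem (TAtom X) = {}"
| "sem (TArr A B) = {VFun G | G. fset G \<subseteq> sem A \<times> sem B \<and> (\<forall>a\<in>sem A. \<exists>!b. (a, b) \<in> fset G)}"
| "sem (TProd A B) = {VPair a b | a b. a \<in> sem A \<and> b \<in> sem B}"
| "sem TOne = {VStar}"
| "sem (TSum A B) = VIn1 ` sem A \<union> VIn2 ` sem B"
| "sem TZero = {}"

definition vapp :: "val \<Rightarrow> val \<Rightarrow> val" where
  "vapp f a = (case f of VFun G \<Rightarrow> (THE b. (a, b) \<in> fset G) | _ \<Rightarrow> undefined)"

definition vfst :: "val \<Rightarrow> val" where
  "vfst p = (case p of VPair a b \<Rightarrow> a | _ \<Rightarrow> undefined)"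

definition vsnd :: "val \<Rightarrow> val" where
  "vsnd p = (case p of VPair a b \<Rightarrow> b | _ \<Rightarrow> undefined)"

primrec eval :: "(var \<Rightarrow> val) \<Rightarrow> tm \<Rightarrow> val" where
  "eval \<rho> (Var x) = \<rho> x"
| "eval \<rho> (Lam x A t) = VFun (Abs_fset ((\<lambda>a. (a, eval (\<rho>(x := a)) t)) ` sem A))"
| "eval \<rho> (App t u) = vapp (eval \<rho> t) (eval \<rho> u)"
| "eval \<rho> (Pr t u) = VPair (eval \<rho> t) (eval \<rho> u)"
| "eval \<rho> (Proj1 t) = vfst (eval \<rho> t)"
| "eval \<rho> (Proj2 t) = vsnd (eval \<rho> t)"
| "eval \<rho> Unit = VStar"
| "eval \<rho> (Inj1 t) = VIn1 (eval \<rho> t)"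
| "eval \<rho> (Inj2 t) = VIn2 (eval \<rho> t)"
| "eval \<rho> (Match t x1 u1 x2 u2) =
     (case eval \<rho> t of VIn1 a \<Rightarrow> eval (\<rho>(x1 := a)) u1
                     | VIn2 b \<Rightarrow> eval (\<rho>(x2 := b)) u2
                     | _ \<Rightarrow> undefined)"
| "eval \<rho> (Absurd t) = undefined"

text \<open>Denotation of a closed term (the environment is irrelevant for closed terms).\<close>
definition denot :: "tm \<Rightarrow> val" where
  "denot t = eval (\<lambda>_. VStar) t"

end

theory Submission
  imports Defs
begin

lemma typed_weaken: "typed \<Gamma> t C \<Longrightarrow> \<Gamma> \<subseteq>\<^sub>m \<Gamma>' \<Longrightarrow> typed \<Gamma>' t C"
proof (induction arbitrary: \<Gamma>' rule: typed.induct)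
  case (t_var \<Gamma> x A)
  then have "\<Gamma>' x = Some A" by (auto simp: map_le_def dom_def)
  then show ?case by (rule typed.t_var)
next
  case (t_lam \<Gamma> x A t B)
  have "\<Gamma>(x \<mapsto> A) \<subseteq>\<^sub>m \<Gamma>'(x \<mapsto> A)" using t_lam.prems by (auto simp: map_le_def)
  then show ?case by (rule typed.t_lam[OF t_lam.IH])
next
  case (t_match \<Gamma> t A1 A2 x1 u1 C x2 u2)
  have "\<Gamma>(x1 \<mapsto> A1) \<subseteq>\<^sub>m \<Gamma>'(x1 \<mapsto> A1)" "\<Gamma>(x2 \<mapsto> A2) \<subseteq>\<^sub>m \<Gamma>'(x2 \<mapsto> A2)"
    using t_match.prems by (auto simp: map_le_def)
  then show ?case by (rule typed.t_match[OF t_match.IH(1)[OF t_match.prems] t_match.IH(2) t_match.IH(3)])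
next
  case (t_app \<Gamma> t A B u) then show ?case by (metis typed.t_app)
next
  case (t_pair \<Gamma> t1 A1 t2 A2) then show ?case by (metis typed.t_pair)
next
  case (t_proj1 \<Gamma> t A1 A2) then show ?case by (metis typed.t_proj1)
next
  case (t_proj2 \<Gamma> t A1 A2) then show ?case by (metis typed.t_proj2)
next
  case (t_unit \<Gamma>) show ?case by (rule typed.t_unit)
next
  case (t_inj1 \<Gamma> t A1 A2) then show ?case by (metis typed.t_inj1)
next
  case (t_inj2 \<Gamma> t A2 A1) then show ?case by (metis typed.t_inj2)
next
  case (t_absurd \<Gamma> t A) then show ?case by (metis typed.t_absurd)
qed

lemma eval_agree: "typed \<Gamma> t C \<Longrightarrow> (\<forall>x\<in>dom \<Gamma>. \<rho> x = \<rho>' x) \<Longrightarrow> eval \<rho> t = eval \<rho>' t"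
proof (induction arbitrary: \<rho> \<rho>' rule: typed.induct)
  case (t_lam \<Gamma> x A t B)
  have "\<And>a. eval (\<rho>(x := a)) t = eval (\<rho>'(x := a)) t"
    using t_lam by (intro t_lam.IH) auto
  then show ?case by simp
next
  case (t_match \<Gamma> t A1 A2 x1 u1 C x2 u2)
  have e: "eval \<rho> t = eval \<rho>' t" using t_match by blast
  have "\<And>a. eval (\<rho>(x1 := a)) u1 = eval (\<rho>'(x1 := a)) u1"
    using t_match by (intro t_match.IH(2)) auto
  moreover have "\<And>a. eval (\<rho>(x2 := a)) u2 = eval (\<rho>'(x2 := a)) u2"
    using t_match by (intro t_match.IH(3)) auto
  ultimately show ?case using e by (simp split: val.split)
next
  case (t_var \<Gamma> x A) then show ?case by (simp add: domI)
next
  case (t_app \<Gamma> t A B u)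
  then have "eval \<rho> t = eval \<rho>' t" "eval \<rho> u = eval \<rho>' u" by blast+
  then show ?case by simp
next
  case (t_pair \<Gamma> t A1 u A2)
  then have "eval \<rho> t = eval \<rho>' t" "eval \<rho> u = eval \<rho>' u" by blast+
  then show ?case by simp
next
  case (t_proj1 \<Gamma> t A1 A2)
  then have "eval \<rho> t = eval \<rho>' t" by blast
  then show ?case by simp
next
  case (t_proj2 \<Gamma> t A1 A2)
  then have "eval \<rho> t = eval \<rho>' t" by blast
  then show ?case by simp
next
  case (t_inj1 \<Gamma> t A1 A2)
  then have "eval \<rho> t = eval \<rho>' t" by blast
  then show ?case by simp
next
  case (t_inj2 \<Gamma> t A2 A1)
  then have "eval \<rho> t = eval \<rho>' t" by blast
  then show ?case by simp
qed simp_all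

lemma vapp_sem:
  assumes "f \<in> sem (TArr A B)" "a \<in> sem A"
  shows "vapp f a \<in> sem B" "\<exists>G. f = VFun G \<and> (a, vapp f a) \<in> fset G"
proof -
  obtain G where G: "f = VFun G" "fset G \<subseteq> sem A \<times> sem B" "\<forall>a\<in>sem A. \<exists>!b. (a, b) \<in> fset G"
    using assms(1) by auto
  have "(a, THE b. (a, b) \<in> fset G) \<in> fset G" using G(3) assms(2) by (metis theI')
  then have "(a, vapp f a) \<in> fset G" by (simp add: G(1) vapp_def)
  then show "vapp f a \<in> sem B" "\<exists>G. f = VFun G \<and> (a, vapp f a) \<in> fset G" using G by auto
qed

lemma graph_eq:
  assumes "f \<in> sem (TArr A B)"
  shows "\<exists>G. f = VFun G \<and> fset G = (\<lambda>a. (a, vapp f a)) ` sem A"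
proof -
  obtain G where G: "f = VFun G" "fset G \<subseteq> sem A \<times> sem B" "\<forall>a\<in>sem A. \<exists>!b. (a, b) \<in> fset G"
    using assms(1) by auto
  have "fset G = (\<lambda>a. (a, vapp f a)) ` sem A"
  proof
    show "(\<lambda>a. (a, vapp f a)) ` sem A \<subseteq> fset G"
      using vapp_sem(2)[OF assms] G(1) by auto
  next
    show "fset G \<subseteq> (\<lambda>a. (a, vapp f a)) ` sem A"
    proof
      fix p assume p: "p \<in> fset G"
      obtain a b where ab: "p = (a, b)" by force
      have a: "a \<in> sem A" using p ab G(2) by auto
      have "(a, vapp f a) \<in> fset G" using vapp_sem(2)[OF assms a] G(1) by auto
      then have "b = vapp f a" using G(3) a p ab by blast
      then show "p \<in> (\<lambda>a. (a, vapp f a)) ` sem A" using a ab by auto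
    qed
  qed
  then show ?thesis using G(1) by blast
qed

lemma finite_sem: "closed_ty A \<Longrightarrow> finite (sem A)"
proof (induction A)
  case (TArr A B)
  have fin: "finite (sem A \<times> sem B)" using TArr by auto
  have "{G. fset G \<subseteq> sem A \<times> sem B} \<subseteq> Abs_fset ` Pow (sem A \<times> sem B)"
    by (auto intro!: image_eqI[where x="fset _"] simp: fset_inverse)
  then have "finite {G. fset G \<subseteq> sem A \<times> sem B}" using fin finite_subset by blast
  moreover have "sem (TArr A B) \<subseteq> VFun ` {G. fset G \<subseteq> sem A \<times> sem B}" by auto
  ultimately show ?case using finite_subset by blast
next
  case (TProd A B)
  have "sem (TProd A B) \<subseteq> (\<lambda>(a,b). VPair a b) ` (sem A \<times> sem B)" by auto
  moreover have "finite ((\<lambda>(a,b). VPair a b) ` (sem A \<times> sem B))" using TProd by auto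
  ultimately show ?case using finite_subset by blast
qed auto

definition REIFY :: "ty \<Rightarrow> bool" where
  "REIFY A \<longleftrightarrow> (\<forall>v\<in>sem A. \<exists>t. typed Map.empty t A \<and> (\<forall>\<rho>. eval \<rho> t = v))"

definition ELIM :: "ty \<Rightarrow> bool" where
  "ELIM A \<longleftrightarrow> (\<forall>\<Gamma> s C (t::val \<Rightarrow> tm). finite (dom \<Gamma>) \<longrightarrow> typed \<Gamma> s A \<longrightarrow>
     (\<forall>a\<in>sem A. typed \<Gamma> (t a) C) \<longrightarrow>
     (\<exists>u. typed \<Gamma> u C \<and> (\<forall>\<rho>. eval \<rho> s \<in> sem A \<longrightarrow> eval \<rho> u = eval \<rho> (t (eval \<rho> s)))))"

lemma reify_one: "REIFY TOne"
  unfolding REIFY_def by (auto intro!: exI[of _ Unit] typed.t_unit)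

lemma elim_one: "ELIM TOne"
  unfolding ELIM_def
proof (intro allI impI)
  fix \<Gamma> s C and t :: "val \<Rightarrow> tm"
  assume "\<forall>a\<in>sem TOne. typed \<Gamma> (t a) C"
  then have "typed \<Gamma> (t VStar) C" by simp
  then show "\<exists>u. typed \<Gamma> u C \<and> (\<forall>\<rho>. eval \<rho> s \<in> sem TOne \<longrightarrow> eval \<rho> u = eval \<rho> (t (eval \<rho> s)))"
    by (intro exI[of _ "t VStar"]) simp
qed

lemma reify_zero: "REIFY TZero"
  unfolding REIFY_def by simp

lemma elim_zero: "ELIM TZero"
  unfolding ELIM_def
proof (intro allI impI)
  fix \<Gamma> s C and t :: "val \<Rightarrow> tm"
  assume "typed \<Gamma> s TZero"
  then have "typed \<Gamma> (Absurd s) C" by (rule typed.intros)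
  then show "\<exists>u. typed \<Gamma> u C \<and> (\<forall>\<rho>. eval \<rho> s \<in> sem TZero \<longrightarrow> eval \<rho> u = eval \<rho> (t (eval \<rho> s)))"
    by (intro exI[of _ "Absurd s"]) simp
qed

lemma reify_sum:
  assumes RA: "REIFY A" and RB: "REIFY B"
  shows "REIFY (TSum A B)"
  unfolding REIFY_def
proof
  fix v assume "v \<in> sem (TSum A B)"
  then consider a where "a \<in> sem A" "v = VIn1 a" | b where "b \<in> sem B" "v = VIn2 b" by auto
  then show "\<exists>t. typed Map.empty t (TSum A B) \<and> (\<forall>\<rho>. eval \<rho> t = v)"
  proof cases
    case 1
    then obtain r where "typed Map.empty r A" "\<forall>\<rho>. eval \<rho> r = a" using RA unfolding REIFY_def by blast
    then show ?thesis using 1 by (intro exI[of _ "Inj1 r"]) (auto intro: typed.t_inj1)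
  next
    case 2
    then obtain r where "typed Map.empty r B" "\<forall>\<rho>. eval \<rho> r = b" using RB unfolding REIFY_def by blast
    then show ?thesis using 2 by (intro exI[of _ "Inj2 r"]) (auto intro: typed.t_inj2)
  qed
qed

lemma reify_prod:
  assumes RA: "REIFY A" and RB: "REIFY B"
  shows "REIFY (TProd A B)"
  unfolding REIFY_def
proof
  fix v assume "v \<in> sem (TProd A B)"
  then obtain a b where ab: "a \<in> sem A" "b \<in> sem B" "v = VPair a b" by auto
  obtain r where r: "typed Map.empty r A" "\<forall>\<rho>. eval \<rho> r = a" using RA ab unfolding REIFY_def by blast
  obtain q where q: "typed Map.empty q B" "\<forall>\<rho>. eval \<rho> q = b" using RB ab unfolding REIFY_def by blast
  show "\<exists>t. typed Map.empty t (TProd A B) \<and> (\<forall>\<rho>. eval \<rho> t = v)"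
    using r q ab by (intro exI[of _ "Pr r q"]) (auto intro: typed.t_pair)
qed

lemma elim_sum:
  assumes EA: "ELIM A1" and EB: "ELIM A2"
  shows "ELIM (TSum A1 A2)"
  unfolding ELIM_def
proof (intro allI impI)
  fix \<Gamma> s C and t :: "val \<Rightarrow> tm"
  assume fin: "finite (dom \<Gamma>)" and ts: "typed \<Gamma> s (TSum A1 A2)"
    and tt: "\<forall>a\<in>sem (TSum A1 A2). typed \<Gamma> (t a) C"
  obtain x :: nat where x: "x \<notin> dom \<Gamma>" using ex_new_if_finite[OF infinite_UNIV_nat fin] by blast
  have le1: "\<Gamma> \<subseteq>\<^sub>m \<Gamma>(x \<mapsto> A1)" and le2: "\<Gamma> \<subseteq>\<^sub>m \<Gamma>(x \<mapsto> A2)"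
    using x by (auto simp: map_le_def)
  have f1: "finite (dom (\<Gamma>(x \<mapsto> A1)))" and f2: "finite (dom (\<Gamma>(x \<mapsto> A2)))" using fin by auto
  have v1: "typed (\<Gamma>(x \<mapsto> A1)) (Var x) A1" and v2: "typed (\<Gamma>(x \<mapsto> A2)) (Var x) A2"
    by (auto intro: typed.t_var)
  have tt1: "\<forall>a\<in>sem A1. typed (\<Gamma>(x \<mapsto> A1)) (t (VIn1 a)) C"
    by (intro ballI typed_weaken[OF _ le1]) (use tt in auto)
  have tt2: "\<forall>a\<in>sem A2. typed (\<Gamma>(x \<mapsto> A2)) (t (VIn2 a)) C"
    by (intro ballI typed_weaken[OF _ le2]) (use tt in auto)
  obtain u1 where u1: "typed (\<Gamma>(x \<mapsto> A1)) u1 C"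
    "\<forall>\<rho>. eval \<rho> (Var x) \<in> sem A1 \<longrightarrow> eval \<rho> u1 = eval \<rho> (t (VIn1 (eval \<rho> (Var x))))"
    using EA[unfolded ELIM_def, rule_format, where \<Gamma>="\<Gamma>(x \<mapsto> A1)" and s="Var x" and C=C and t="\<lambda>a. t (VIn1 a)", OF f1 v1 tt1[rule_format]] by blast
  obtain u2 where u2: "typed (\<Gamma>(x \<mapsto> A2)) u2 C"
    "\<forall>\<rho>. eval \<rho> (Var x) \<in> sem A2 \<longrightarrow> eval \<rho> u2 = eval \<rho> (t (VIn2 (eval \<rho> (Var x))))"
    using EB[unfolded ELIM_def, rule_format, where \<Gamma>="\<Gamma>(x \<mapsto> A2)" and s="Var x" and C=C and t="\<lambda>a. t (VIn2 a)", OF f2 v2 tt2[rule_format]] by blast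
  show "\<exists>u. typed \<Gamma> u C \<and> (\<forall>\<rho>. eval \<rho> s \<in> sem (TSum A1 A2) \<longrightarrow> eval \<rho> u = eval \<rho> (t (eval \<rho> s)))"
  proof (intro exI conjI allI impI)
    show "typed \<Gamma> (Match s x u1 x u2) C" using ts u1(1) u2(1) by (rule typed.intros)
  next
    fix \<rho> assume m: "eval \<rho> s \<in> sem (TSum A1 A2)"
    have ag: "\<And>a w. typed \<Gamma> w C \<Longrightarrow> eval (\<rho>(x := a)) w = eval \<rho> w"
      using x by (rule_tac eval_agree) auto
    show "eval \<rho> (Match s x u1 x u2) = eval \<rho> (t (eval \<rho> s))"
    proof (cases "eval \<rho> s \<in> VIn1 ` sem A1")
      case True
      then obtain a where a: "a \<in> sem A1" "eval \<rho> s = VIn1 a" by auto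
      have "eval (\<rho>(x := a)) u1 = eval (\<rho>(x := a)) (t (VIn1 a))" using u1(2) a by auto
      also have "\<dots> = eval \<rho> (t (VIn1 a))" using ag tt a by auto
      finally show ?thesis using a by simp
    next
      case False
      then obtain a where a: "a \<in> sem A2" "eval \<rho> s = VIn2 a" using m by auto
      have "eval (\<rho>(x := a)) u2 = eval (\<rho>(x := a)) (t (VIn2 a))" using u2(2) a by auto
      also have "\<dots> = eval \<rho> (t (VIn2 a))" using ag tt a by auto
      finally show ?thesis using a by simp
    qed
  qed
qed

lemma elim_prod:
  assumes EA: "ELIM A1" and EB: "ELIM A2"
  shows "ELIM (TProd A1 A2)"
  unfolding ELIM_def
proof (intro allI impI)
  fix \<Gamma> s C and t :: "val \<Rightarrow> tm"
  assume fin: "finite (dom \<Gamma>)" and ts: "typed \<Gamma> s (TProd A1 A2)"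
    and tt: "\<forall>a\<in>sem (TProd A1 A2). typed \<Gamma> (t a) C"
  have t1: "typed \<Gamma> (Proj1 s) A1" and t2: "typed \<Gamma> (Proj2 s) A2" using ts by (auto intro: typed.t_proj1 typed.t_proj2)
  have ch0: "\<forall>a\<in>sem A1. \<exists>u. typed \<Gamma> u C \<and> (\<forall>\<rho>. eval \<rho> (Proj2 s) \<in> sem A2 \<longrightarrow>
          eval \<rho> u = eval \<rho> (t (VPair a (eval \<rho> (Proj2 s)))))"
  proof
    fix a assume a: "a \<in> sem A1"
    have "\<forall>b\<in>sem A2. typed \<Gamma> (t (VPair a b)) C" using tt a by auto
    then show "\<exists>u. typed \<Gamma> u C \<and> (\<forall>\<rho>. eval \<rho> (Proj2 s) \<in> sem A2 \<longrightarrow>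
          eval \<rho> u = eval \<rho> (t (VPair a (eval \<rho> (Proj2 s)))))"
      using EB[unfolded ELIM_def, rule_format, where C=C and t="\<lambda>b. t (VPair a b)", OF fin t2] by blast
  qed
  then obtain U where U: "\<forall>a\<in>sem A1. typed \<Gamma> (U a) C \<and> (\<forall>\<rho>. eval \<rho> (Proj2 s) \<in> sem A2 \<longrightarrow>
          eval \<rho> (U a) = eval \<rho> (t (VPair a (eval \<rho> (Proj2 s)))))"
    using bchoice[OF ch0] by blast
  obtain u where u: "typed \<Gamma> u C"
    "\<forall>\<rho>. eval \<rho> (Proj1 s) \<in> sem A1 \<longrightarrow> eval \<rho> u = eval \<rho> (U (eval \<rho> (Proj1 s)))"
    using EA[unfolded ELIM_def, rule_format, where C=C and t=U, OF fin t1] U by blast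
  show "\<exists>u. typed \<Gamma> u C \<and> (\<forall>\<rho>. eval \<rho> s \<in> sem (TProd A1 A2) \<longrightarrow> eval \<rho> u = eval \<rho> (t (eval \<rho> s)))"
  proof (intro exI conjI allI impI)
    show "typed \<Gamma> u C" by (rule u(1))
  next
    fix \<rho> assume m: "eval \<rho> s \<in> sem (TProd A1 A2)"
    then obtain a b where ab: "eval \<rho> s = VPair a b" "a \<in> sem A1" "b \<in> sem A2" by auto
    have "eval \<rho> u = eval \<rho> (U a)" using u(2) ab by (simp add: vfst_def)
    also have "\<dots> = eval \<rho> (t (VPair a b))" using U ab by (simp add: vsnd_def)
    finally show "eval \<rho> u = eval \<rho> (t (eval \<rho> s))" using ab by simp
  qed
qed

lemma reify_arr:
  assumes EA: "ELIM A" and RB: "REIFY B"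
  shows "REIFY (TArr A B)"
  unfolding REIFY_def
proof
  fix v assume v: "v \<in> sem (TArr A B)"
  have ch1: "\<forall>a\<in>sem A. \<exists>r. typed Map.empty r B \<and> (\<forall>\<rho>. eval \<rho> r = vapp v a)"
    using RB vapp_sem(1)[OF v] unfolding REIFY_def by blast
  then obtain R where R: "\<forall>a\<in>sem A. typed Map.empty (R a) B \<and> (\<forall>\<rho>. eval \<rho> (R a) = vapp v a)"
    using bchoice[OF ch1] by blast
  define x :: nat where "x = 0"
  have f: "finite (dom [x \<mapsto> A])" by simp
  have tv: "typed [x \<mapsto> A] (Var x) A" by (auto intro: typed.t_var)
  have tR: "\<forall>a\<in>sem A. typed [x \<mapsto> A] (R a) B"
  proof
    fix a assume a: "a \<in> sem A"
    have "typed Map.empty (R a) B" using R a by blast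
    then show "typed [x \<mapsto> A] (R a) B" by (rule typed_weaken) (simp add: map_le_def)
  qed
  obtain u where u: "typed [x \<mapsto> A] u B"
    "\<forall>\<rho>. eval \<rho> (Var x) \<in> sem A \<longrightarrow> eval \<rho> u = eval \<rho> (R (eval \<rho> (Var x)))"
    using EA[unfolded ELIM_def, rule_format, where \<Gamma>="[x \<mapsto> A]" and s="Var x" and C=B and t=R, OF f tv tR[rule_format]] by blast
  obtain G where G: "v = VFun G" "fset G = (\<lambda>a. (a, vapp v a)) ` sem A"
    using graph_eq[OF v] by blast
  show "\<exists>t. typed Map.empty t (TArr A B) \<and> (\<forall>\<rho>. eval \<rho> t = v)"
  proof (intro exI conjI allI)
    show "typed Map.empty (Lam x A u) (TArr A B)" using u(1) by (rule typed.t_lam)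
  next
    fix \<rho>
    have "(\<lambda>a. (a, eval (\<rho>(x := a)) u)) ` sem A = (\<lambda>a. (a, vapp v a)) ` sem A"
    proof (rule image_cong[OF refl])
      fix a assume a: "a \<in> sem A"
      have "eval (\<rho>(x := a)) u = eval (\<rho>(x := a)) (R a)" using u(2)[rule_format, of "\<rho>(x := a)"] a by simp
      also have "\<dots> = vapp v a" using R a by blast
      finally show "(a, eval (\<rho>(x := a)) u) = (a, vapp v a)" by simp
    qed
    then have "eval \<rho> (Lam x A u) = VFun (Abs_fset ((\<lambda>a. (a, vapp v a)) ` sem A))" by simp
    also have "\<dots> = VFun (Abs_fset (fset G))" by (simp only: G(2))
    also have "\<dots> = v" by (simp add: G(1) fset_inverse)
    finally show "eval \<rho> (Lam x A u) = v" .
  qed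
qed

lemma set_zip_map: "set (zip as (map g as)) = (\<lambda>a. (a, g a)) ` set as"
  by (induction as) auto

lemma zip_mem:
  assumes d: "distinct as" and sA: "set as = sem A" and l: "length bs = length as"
    and sB: "set bs \<subseteq> sem B"
  shows "VFun (fset_of_list (zip as bs)) \<in> sem (TArr A B)"
proof -
  have sub: "set (zip as bs) \<subseteq> sem A \<times> sem B"
    using sA sB by (auto dest: set_zip_leftD set_zip_rightD)
  have uq: "\<forall>a\<in>sem A. \<exists>!b. (a, b) \<in> set (zip as bs)"
  proof
    fix a assume "a \<in> sem A"
    then obtain i where i: "i < length as" "as ! i = a" using sA by (metis in_set_conv_nth)
    have ex: "(a, bs ! i) \<in> set (zip as bs)" using i l by (auto simp: set_zip)
    have "\<And>b. (a, b) \<in> set (zip as bs) \<Longrightarrow> b = bs ! i"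
    proof -
      fix b assume "(a, b) \<in> set (zip as bs)"
      then obtain j where j: "j < length as" "as ! j = a" "bs ! j = b" using l by (auto simp: set_zip)
      then have "j = i" using i d by (metis nth_eq_iff_index_eq)
      then show "b = bs ! i" using j by simp
    qed
    then show "\<exists>!b. (a, b) \<in> set (zip as bs)" using ex by blast
  qed
  show ?thesis using sub uq by (auto simp: fset_of_list.rep_eq)
qed

lemma funval:
  assumes d: "distinct as" and sA: "set as = sem A" and f: "f \<in> sem (TArr A B)"
  shows "VFun (fset_of_list (zip as (map (vapp f) as))) = f"
proof -
  obtain G where G: "f = VFun G" "fset G = (\<lambda>a. (a, vapp f a)) ` sem A"
    using graph_eq[OF f] by blast
  have "fset (fset_of_list (zip as (map (vapp f) as))) = fset G"
    using G(2) sA by (simp add: fset_of_list.rep_eq set_zip_map)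
  then show ?thesis using G(1) by (metis fset_inject)
qed

lemma elim_list:
  assumes RA: "REIFY A" and EB: "ELIM B" and fin: "finite (dom \<Gamma>)"
    and ts: "typed \<Gamma> s (TArr A B)"
  shows "set as \<subseteq> sem A \<Longrightarrow> \<forall>T. (\<forall>bs. length bs = length as \<longrightarrow> set bs \<subseteq> sem B \<longrightarrow> typed \<Gamma> (T bs) C)
     \<longrightarrow> (\<exists>u. typed \<Gamma> u C \<and> (\<forall>\<rho>. eval \<rho> s \<in> sem (TArr A B) \<longrightarrow>
            eval \<rho> u = eval \<rho> (T (map (vapp (eval \<rho> s)) as))))"
proof (induction as)
  case Nil
  show ?case
  proof (intro allI impI)
    fix T :: "val list \<Rightarrow> tm"
    assume "\<forall>bs. length bs = length ([]::val list) \<longrightarrow> set bs \<subseteq> sem B \<longrightarrow> typed \<Gamma> (T bs) C"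
    then have "typed \<Gamma> (T []) C" by simp
    then show "\<exists>u. typed \<Gamma> u C \<and> (\<forall>\<rho>. eval \<rho> s \<in> sem (TArr A B) \<longrightarrow>
            eval \<rho> u = eval \<rho> (T (map (vapp (eval \<rho> s)) [])))" by auto
  qed
next
  case (Cons a as)
  show ?case
  proof (intro allI impI)
    fix T :: "val list \<Rightarrow> tm"
    assume tT: "\<forall>bs. length bs = length (a # as) \<longrightarrow> set bs \<subseteq> sem B \<longrightarrow> typed \<Gamma> (T bs) C"
    have a: "a \<in> sem A" and as: "set as \<subseteq> sem A" using Cons.prems by auto
    have ch2: "\<forall>b\<in>sem B. \<exists>u. typed \<Gamma> u C \<and> (\<forall>\<rho>. eval \<rho> s \<in> sem (TArr A B) \<longrightarrow>
            eval \<rho> u = eval \<rho> (T (b # map (vapp (eval \<rho> s)) as)))"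
    proof
      fix b assume b: "b \<in> sem B"
      have "\<forall>bs. length bs = length as \<longrightarrow> set bs \<subseteq> sem B \<longrightarrow> typed \<Gamma> (T (b # bs)) C"
        using tT b by auto
      then show "\<exists>u. typed \<Gamma> u C \<and> (\<forall>\<rho>. eval \<rho> s \<in> sem (TArr A B) \<longrightarrow>
            eval \<rho> u = eval \<rho> (T (b # map (vapp (eval \<rho> s)) as)))"
        using Cons.IH[OF as, rule_format, where T="\<lambda>bs. T (b # bs)"] by blast
    qed
    then obtain U where U: "\<forall>b\<in>sem B. typed \<Gamma> (U b) C \<and> (\<forall>\<rho>. eval \<rho> s \<in> sem (TArr A B) \<longrightarrow>
            eval \<rho> (U b) = eval \<rho> (T (b # map (vapp (eval \<rho> s)) as)))"
      using bchoice[OF ch2] by blast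
    obtain r where r: "typed Map.empty r A" "\<forall>\<rho>. eval \<rho> r = a"
      using RA a unfolding REIFY_def by blast
    have tr: "typed \<Gamma> r A" using r(1) typed_weaken by (auto simp: map_le_def)
    have tapp: "typed \<Gamma> (App s r) B" using ts tr by (rule typed.intros)
    obtain u where u: "typed \<Gamma> u C"
      "\<forall>\<rho>. eval \<rho> (App s r) \<in> sem B \<longrightarrow> eval \<rho> u = eval \<rho> (U (eval \<rho> (App s r)))"
      using EB[unfolded ELIM_def, rule_format, where C=C and t=U, OF fin tapp] U by blast
    show "\<exists>u. typed \<Gamma> u C \<and> (\<forall>\<rho>. eval \<rho> s \<in> sem (TArr A B) \<longrightarrow>
            eval \<rho> u = eval \<rho> (T (map (vapp (eval \<rho> s)) (a # as))))"
    proof (intro exI conjI allI impI)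
      show "typed \<Gamma> u C" by (rule u(1))
    next
      fix \<rho> assume m: "eval \<rho> s \<in> sem (TArr A B)"
      have e: "eval \<rho> (App s r) = vapp (eval \<rho> s) a" using r(2) by simp
      have vb: "vapp (eval \<rho> s) a \<in> sem B" using vapp_sem(1)[OF m a] .
      show "eval \<rho> u = eval \<rho> (T (map (vapp (eval \<rho> s)) (a # as)))"
        using u(2) e vb U m by simp
    qed
  qed
qed

lemma elim_arr:
  assumes cA: "closed_ty A" and RA: "REIFY A" and EB: "ELIM B"
  shows "ELIM (TArr A B)"
  unfolding ELIM_def
proof (intro allI impI)
  fix \<Gamma> s C and t :: "val \<Rightarrow> tm"
  assume fin: "finite (dom \<Gamma>)" and ts: "typed \<Gamma> s (TArr A B)"
    and tt: "\<forall>a\<in>sem (TArr A B). typed \<Gamma> (t a) C"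
  obtain as where as: "distinct as" "set as = sem A"
    using finite_distinct_list[OF finite_sem[OF cA]] by blast
  have "\<forall>bs. length bs = length as \<longrightarrow> set bs \<subseteq> sem B \<longrightarrow>
          typed \<Gamma> (t (VFun (fset_of_list (zip as bs)))) C"
    using tt zip_mem[OF as] by auto
  moreover have "set as \<subseteq> sem A" using as by simp
  ultimately obtain u where u: "typed \<Gamma> u C" "\<forall>\<rho>. eval \<rho> s \<in> sem (TArr A B) \<longrightarrow>
            eval \<rho> u = eval \<rho> (t (VFun (fset_of_list (zip as (map (vapp (eval \<rho> s)) as)))))"
    using elim_list[OF RA EB fin ts, where as=as and C=C, rule_format, where T="\<lambda>bs. t (VFun (fset_of_list (zip as bs)))"] by blast
  show "\<exists>u. typed \<Gamma> u C \<and> (\<forall>\<rho>. eval \<rho> s \<in> sem (TArr A B) \<longrightarrow> eval \<rho> u = eval \<rho> (t (eval \<rho> s)))"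
  proof (intro exI conjI allI impI)
    show "typed \<Gamma> u C" by (rule u(1))
  next
    fix \<rho> assume m: "eval \<rho> s \<in> sem (TArr A B)"
    show "eval \<rho> u = eval \<rho> (t (eval \<rho> s))" using u(2) m funval[OF as m] by simp
  qed
qed

lemma main: "closed_ty A \<Longrightarrow> REIFY A \<and> ELIM A"
proof (induction A)
  case (TArr A B) then show ?case using reify_arr elim_arr by auto
next
  case (TProd A B) then show ?case using reify_prod elim_prod by auto
next
  case (TSum A B) then show ?case using reify_sum elim_sum by auto
qed (auto simp: reify_one elim_one reify_zero elim_zero)

theorem mainTheorem7:
  assumes "closed_ty A" and "v \<in> sem A"
  shows "\<exists>t. typed Map.empty t A \<and> denot t = v"
proof -
  have "REIFY A" using main[OF assms(1)] by simp
  then obtain t where "typed Map.empty t A" "\<forall>\<rho>. eval \<rho> t = v" using assms(2) unfolding REIFY_def by blast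
  then show ?thesis unfolding denot_def by blast
qed

end
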